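(* For all integers $n\geq0$ and $m\geq1$, we have $a_{2m}^{\star}(n)\equiv 0 \pmod{2m}$.
   Context: A partition is self-conjugate if its Young diagram is symmetric about the main diagonal. The hook length of the cell $(i,j)$ of a Young diagram is the number of cells to its right in row $i$ plus the number below it in column $j$ plus $1$; $n_t(\lambda)$ is the number of cells of $\lambda$ with hook length $t$. Define $a_t^{\star}(n)=\sum n_t(\lambda)$, the sum over all self-conjugate partitions $\lambda$ of $n$ (so $a_t^\star(0)=0$). *)

theory Defs
  imports Main
begin

text \<open>The Young diagram consists of cells (i,j) with i < length lam and
j < lam ! i (0-based row and column indices).\<close>

definition is_partition :: "nat list \<Rightarrow> bool" where
  "is_partition lam \<longleftrightarrow> sorted_wrt (\<ge>) lam \<and> (\<forall>x\<in>set lam. 0 < x)"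

definition partitions :: "nat \<Rightarrow> nat list set" where
  "partitions n = {lam. is_partition lam \<and> sum_list lam = n}"

definition cells :: "nat list \<Rightarrow> (nat \<times> nat) set" where
  "cells lam = {(i, j). i < length lam \<and> j < lam ! i}"

definition col_len :: "nat list \<Rightarrow> nat \<Rightarrow> nat" where
  "col_len lam j = card {i. i < length lam \<and> j < lam ! i}"

definition conjugate :: "nat list \<Rightarrow> nat list" where
  "conjugate lam = map (col_len lam) [0..<(if lam = [] then 0 else hd lam)]"

definition self_conjugate :: "nat list \<Rightarrow> bool" where
  "self_conjugate lam \<longleftrightarrow> conjugate lam = lam"

text \<open>Hook length of cell (i,j): arm (cells to the right) + leg (cells below) + 1.\<close>
definition hook :: "nat list \<Rightarrow> nat \<times> nat \<Rightarrow> nat" where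
  "hook lam c = (case c of (i, j) \<Rightarrow>
      (lam ! i - (j + 1)) + (col_len lam j - (i + 1)) + 1)"

definition n_hook :: "nat \<Rightarrow> nat list \<Rightarrow> nat" where
  "n_hook t lam = card {c \<in> cells lam. hook lam c = t}"

definition a_star :: "nat \<Rightarrow> nat \<Rightarrow> nat" where
  "a_star t n = (\<Sum>lam \<in> {lam \<in> partitions n. self_conjugate lam}. n_hook t lam)"

end

theory Submission
  imports Defs
begin


definition mem :: "nat set \<Rightarrow> int \<Rightarrow> bool" where
  "mem A u \<longleftrightarrow> (if u \<ge> 0 then nat u \<in> A else nat (-1-u) \<notin> A)"

lemma mem_neg: "mem A (-1-u) \<longleftrightarrow> \<not> mem A u"
  unfolding mem_def by auto

definition maya :: "int set \<Rightarrow> bool" where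
  "maya T \<longleftrightarrow> (\<exists>l u. \<forall>k. (k < l \<longrightarrow> k \<in> T) \<and> (u \<le> k \<longrightarrow> k \<notin> T))"

definition PP :: "int set \<Rightarrow> int set" where "PP T = {k\<in>T. 0 \<le> k}"
definition NN :: "int set \<Rightarrow> int set" where "NN T = {k. k < 0 \<and> k \<notin> T}"

lemma maya_fin: assumes "maya T" shows "finite (PP T)" "finite (NN T)"
proof -
  obtain l u where lu: "\<And>k. (k < l \<longrightarrow> k \<in> T) \<and> (u \<le> k \<longrightarrow> k \<notin> T)"
    using assms unfolding maya_def by blast
  have "PP T \<subseteq> {0..u}" unfolding PP_def
  proof
    fix x assume "x \<in> {k \<in> T. 0 \<le> k}" thus "x \<in> {0..u}" using lu[of x] by force
  qed
  thus "finite (PP T)" using finite_subset by blast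
  have "NN T \<subseteq> {l..0}" unfolding NN_def
  proof
    fix x assume "x \<in> {k. k < 0 \<and> k \<notin> T}" thus "x \<in> {l..0}" using lu[of x] by force
  qed
  thus "finite (NN T)" using finite_subset by blast
qed

definition ch :: "int set \<Rightarrow> int" where
  "ch T = int (card (PP T)) - int (card (NN T))"
definition gg :: "int set \<Rightarrow> int" where
  "gg T = (\<Sum>k\<in>PP T. k) + (\<Sum>k\<in>NN T. - k)"
definition shift :: "int \<Rightarrow> int set \<Rightarrow> int set" where
  "shift d T = {k. k - d \<in> T}"

lemma shift_shift: "shift a (shift b T) = shift (a+b) T"
  unfolding shift_def by (auto simp: algebra_simps)
lemma shift_0: "shift 0 T = T" unfolding shift_def by auto

lemma maya_shift: "maya T \<Longrightarrow> maya (shift d T)"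
  unfolding maya_def shift_def
  apply clarify
  subgoal for l u by (rule exI[of _ "l+d"], rule exI[of _ "u+d"]) auto
  done

lemma img1: "(x::int) \<in> (\<lambda>k. k + 1) ` S \<longleftrightarrow> x - 1 \<in> S"
  by (auto simp: image_iff) (rule bexI[of _ "x - 1"], auto)

lemma shift1_facts:
  assumes "maya T"
  shows "ch (shift 1 T) = ch T + 1 \<and> gg (shift 1 T) = gg T + ch T"
proof -
  have fP: "finite (PP T)" and fN: "finite (NN T)" using maya_fin[OF assms] by auto
  let ?f = "\<lambda>k::int. k + 1"
  have inj: "inj_on ?f X" for X by (auto simp: inj_on_def)
  show ?thesis
  proof (cases "-1 \<in> T")
    case True
    have P': "PP (shift 1 T) = insert 0 (?f ` PP T)"
      using True unfolding PP_def shift_def by (auto simp: img1)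
    have N': "NN (shift 1 T) = ?f ` NN T"
      using True unfolding NN_def shift_def by (auto simp: img1) (smt (verit))
    have n0: "0 \<notin> ?f ` PP T" unfolding PP_def by auto
    have "card (PP (shift 1 T)) = card (PP T) + 1"
      using fP n0 by (simp add: P' card_image[OF inj])
    moreover have "card (NN (shift 1 T)) = card (NN T)"
      by (simp add: N' card_image[OF inj])
    moreover have "(\<Sum>k\<in>PP (shift 1 T). k) = (\<Sum>k\<in>PP T. k) + int (card (PP T))"
      using fP n0 by (simp add: P' sum.reindex[OF inj] sum.distrib)
    moreover have "(\<Sum>k\<in>NN (shift 1 T). -k) = (\<Sum>k\<in>NN T. -k) - int (card (NN T))"
      using fN by (simp add: N' sum.reindex[OF inj] sum.distrib sum_negf)
    ultimately show ?thesis unfolding ch_def gg_def by simp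
  next
    case False
    have P': "PP (shift 1 T) = ?f ` PP T"
      using False unfolding PP_def shift_def by (auto simp: img1) (smt (verit))
    have mN: "-1 \<in> NN T" using False unfolding NN_def by auto
    have N': "NN (shift 1 T) = ?f ` (NN T - {-1})"
      using False unfolding NN_def shift_def by (auto simp: img1)
    have "card (PP (shift 1 T)) = card (PP T)"
      by (simp add: P' card_image[OF inj])
    moreover have "card (NN (shift 1 T)) = card (NN T) - 1"
      using fN mN by (simp add: N' card_image[OF inj])
    moreover have c1: "card (NN T) \<ge> 1"
      using fN mN by (auto simp: Suc_le_eq card_gt_0_iff)
    moreover have "(\<Sum>k\<in>PP (shift 1 T). k) = (\<Sum>k\<in>PP T. k) + int (card (PP T))"
      using fP by (simp add: P' sum.reindex[OF inj] sum.distrib)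
    moreover have "(\<Sum>k\<in>NN (shift 1 T). -k) = (\<Sum>k\<in>NN T. -k) - 1 - (int (card (NN T)) - 1)"
    proof -
      have "(\<Sum>k\<in>NN (shift 1 T). -k) = (\<Sum>k\<in>NN T - {-1}. -k) - int (card (NN T - {-1}))"
        using fN by (simp add: N' sum.reindex[OF inj] sum.distrib sum_negf sum_subtractf)
      also have "(\<Sum>k\<in>NN T - {-1}. -k) = (\<Sum>k\<in>NN T. -k) - 1"
        using fN mN by (simp add: sum_diff1)
      also have "int (card (NN T - {-1})) = int (card (NN T)) - 1"
        using fN mN c1 by (simp add: of_nat_diff)
      finally show ?thesis by simp
    qed
    ultimately show ?thesis unfolding ch_def gg_def by simp
  qed
qed

definition ee :: "int set \<Rightarrow> int" where
  "ee T = gg T - ch T * (ch T - 1) div 2"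

lemma div_aux: "(x + 2*c) div 2 = x div 2 + (c::int)"
  by simp

lemma ee1: assumes "maya T" shows "ee (shift 1 T) = ee T"
proof -
  have h: "ch (shift 1 T) = ch T + 1" "gg (shift 1 T) = gg T + ch T"
    using shift1_facts[OF assms] by auto
  have "(ch T + 1) * (ch T + 1 - 1) = ch T * (ch T - 1) + 2 * ch T"
    by (simp add: algebra_simps)
  hence "(ch T + 1) * (ch T + 1 - 1) div 2 = ch T * (ch T - 1) div 2 + ch T"
    using div_aux by simp
  thus ?thesis unfolding ee_def h by simp
qed

lemma shift_gen: assumes "maya T" shows "ch (shift d T) = ch T + d \<and> ee (shift d T) = ee T"
proof (induction d rule: int_induct[where k=0])
  case base
  then show ?case by (simp add: shift_0)
next
  case (step1 i)
  have m: "maya (shift i T)" using maya_shift[OF assms] .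
  have "shift (i+1) T = shift 1 (shift i T)" by (simp add: shift_shift add.commute)
  then show ?case using shift1_facts[OF m] ee1[OF m] step1 by simp
next
  case (step2 i)
  have m: "maya (shift (i-1) T)" using maya_shift[OF assms] .
  have "shift i T = shift 1 (shift (i-1) T)" by (simp add: shift_shift)
  then show ?case using shift1_facts[OF m] ee1[OF m] step2 by simp
qed

definition desc :: "int set \<Rightarrow> nat" where
  "desc T = card {k. k \<in> T \<and> k - 1 \<notin> T}"

lemma desc_shift: "desc (shift d T) = desc T"
proof -
  have "{k. k \<in> shift d T \<and> k - 1 \<notin> shift d T} = (\<lambda>k. k + d) ` {k. k \<in> T \<and> k - 1 \<notin> T}"
    unfolding shift_def by (auto simp: image_iff algebra_simps) (rule exI[of _ "_ - d"], auto simp: algebra_simps)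
  moreover have "inj (\<lambda>k::int. k + d)" by (auto simp: inj_on_def)
  ultimately show ?thesis unfolding desc_def by (simp add: card_image inj_on_subset)
qed

definition runner :: "nat \<Rightarrow> nat set \<Rightarrow> nat \<Rightarrow> int set" where
  "runner m A r = {k. mem A (int r + 2 * int m * k)}"

definition fromT :: "nat \<Rightarrow> (nat \<Rightarrow> int set) \<Rightarrow> nat set" where
  "fromT m F = {a. if a mod (2*m) < m then int (a div (2*m)) \<in> F (a mod (2*m))
      else - int (a div (2*m)) - 1 \<notin> F (2*m - 1 - a mod (2*m))}"

lemma mem_nat: "mem A (int a) \<longleftrightarrow> a \<in> A" unfolding mem_def by simp

lemma decomp: "int a = int (a mod (2*m)) + 2 * int m * int (a div (2*m))"
proof -
  have "a = a mod (2*m) + 2 * m * (a div (2*m))" by simp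
  hence "int a = int (a mod (2*m) + 2 * m * (a div (2*m)))" by simp
  thus ?thesis by (simp only: of_nat_add of_nat_mult of_nat_numeral)
qed

lemma fromT_runner: assumes "m > 0" shows "fromT m (runner m A) = A"
proof (rule set_eqI)
  fix a
  let ?q = "a mod (2*m)" and ?k = "a div (2*m)"
  have d: "int a = int ?q + 2 * int m * int ?k" by (rule decomp)
  have ql: "?q < 2*m" using assms by simp
  show "a \<in> fromT m (runner m A) \<longleftrightarrow> a \<in> A"
  proof (cases "?q < m")
    case True
    then show ?thesis unfolding fromT_def runner_def by (simp add: d[symmetric] mem_nat)
  next
    case False
    have e: "int (2 * m - 1 - ?q) + 2 * int m * (- int ?k - 1) = -1 - int a"
      using False ql d by (simp add: of_nat_diff algebra_simps)
    have "a \<in> fromT m (runner m A) \<longleftrightarrow> \<not> mem A (int (2 * m - 1 - ?q) + 2 * int m * (- int ?k - 1))"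
      using False unfolding fromT_def runner_def by simp
    also have "\<dots> \<longleftrightarrow> \<not> mem A (-1 - int a)" by (simp only: e)
    also have "\<dots> \<longleftrightarrow> a \<in> A" by (simp add: mem_neg mem_nat)
    finally show ?thesis .
  qed
qed

lemma modr: assumes "r < n" shows "(r + n * j) mod n = (r::nat)" "(r + n * j) div n = j"
  using assms by auto

lemma runner_fromT: assumes "m > 0" "r < m" shows "runner m (fromT m F) r = F r"
proof (rule set_eqI)
  fix k :: int
  show "k \<in> runner m (fromT m F) r \<longleftrightarrow> k \<in> F r"
  proof (cases "k \<ge> 0")
    case True
    have e: "int r + 2 * int m * k = int (r + 2*m * nat k)" using True by simp
    have "r < 2*m" using assms by simp
    note md = modr[OF this, of "nat k"]
    have "k \<in> runner m (fromT m F) r \<longleftrightarrow> mem (fromT m F) (int r + 2 * int m * k)"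
      unfolding runner_def by simp
    also have "\<dots> \<longleftrightarrow> mem (fromT m F) (int (r + 2*m * nat k))"
      by (simp only: e)
    also have "\<dots> \<longleftrightarrow> k \<in> F r" unfolding mem_nat fromT_def using md assms True by simp
    finally show ?thesis .
  next
    case False
    have neg: "int r + 2 * int m * k < 0"
    proof -
      have "2 * int m * k \<le> 2 * int m * (-1)" using False assms
        by (intro mult_left_mono) auto
      thus ?thesis using assms by (simp add: algebra_simps)
    qed
    have e: "-1 - (int r + 2 * int m * k) = int ((2*m - 1 - r) + 2*m * nat (-k-1))"
      using False assms by (simp add: of_nat_diff algebra_simps)
    have "2*m - 1 - r < 2*m" using assms by simp
    note md = modr[OF this, of "nat (-k-1)"]
    have ge: "\<not> (2*m - 1 - r < m)" using assms by simp
    have rr: "2 * m - 1 - (2 * m - 1 - r) = r" using assms by simp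
    have kk: "- int (nat (- k - 1)) - 1 = k" using False by simp
    have "k \<in> runner m (fromT m F) r \<longleftrightarrow> \<not> mem (fromT m F) (-1 - (int r + 2 * int m * k))"
      unfolding runner_def by (simp add: mem_neg)
    also have "\<dots> \<longleftrightarrow> k \<in> F r"
      unfolding e mem_nat fromT_def using md ge rr kk by simp
    finally show ?thesis .
  qed
qed

lemma fromT_cong: assumes "m > 0" "\<And>r. r < m \<Longrightarrow> F r = G r" shows "fromT m F = fromT m G"
proof -
  have "a \<in> fromT m F \<longleftrightarrow> a \<in> fromT m G" for a
  proof -
    have q: "a mod (2*m) < 2*m" using assms by simp
    show ?thesis unfolding fromT_def using assms(2)[of "a mod (2*m)"] assms(2)[of "2*m - 1 - a mod (2*m)"] q
      by auto
  qed
  thus ?thesis by blast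
qed




lemma maya_runner: assumes "finite A" "m > 0" shows "maya (runner m A r)"
proof -
  obtain N where N: "\<And>a. a \<in> A \<Longrightarrow> a < N" using assms(1) finite_nat_set_iff_bounded by auto
  have m1: "int m \<ge> 1" using assms(2) by simp
  show ?thesis unfolding maya_def
  proof (intro exI allI conjI impI)
    fix k :: int
    assume k: "int N \<le> k"
    have "1 * k \<le> int m * k" using m1 k by (intro mult_right_mono) auto
    hence u: "int r + 2 * int m * k \<ge> int N" using k by simp
    hence "nat (int r + 2 * int m * k) \<notin> A" using N by force
    thus "k \<notin> runner m A r" unfolding runner_def mem_def using u by simp
  next
    fix k :: int
    assume k: "k < - (int N + int r + 1)"
    have "2 * int m * k \<le> 2 * k" using m1 k by (intro mult_right_mono_neg) auto
    hence a: "int r + 2 * int m * k < 0" "-1 - (int r + 2 * int m * k) \<ge> int N" using k by linarith+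
    hence "nat (-1 - (int r + 2 * int m * k)) \<notin> A" using N by force
    thus "k \<in> runner m A r" unfolding runner_def mem_def using a by simp
  qed
qed

lemma finite_fromT: assumes "m > 0" "\<And>r. r < m \<Longrightarrow> maya (F r)" shows "finite (fromT m F)"
proof -
  let ?X = "(\<Union>r\<in>{..<m}. (\<lambda>k. r + 2*m*nat k) ` PP (F r)) \<union>
            (\<Union>r\<in>{..<m}. (\<lambda>k. (2*m-1-r) + 2*m*nat(-k-1)) ` NN (F r))"
  have "fromT m F \<subseteq> ?X"
  proof
    fix a assume a: "a \<in> fromT m F"
    let ?q = "a mod (2*m)" and ?d = "a div (2*m)"
    have ad: "a = ?q + 2*m*?d" by simp
    have ql: "?q < 2*m" using assms by simp
    show "a \<in> ?X"
    proof (cases "?q < m")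
      case True
      hence "int ?d \<in> PP (F ?q)" using a unfolding fromT_def PP_def by simp
      moreover have "a = ?q + 2*m*nat (int ?d)" by simp
      ultimately show ?thesis using True by blast
    next
      case False
      let ?r = "2*m-1-?q"
      have rl: "?r < m" using False ql by simp
      have "- int ?d - 1 \<in> NN (F ?r)" using a False unfolding fromT_def NN_def by simp
      moreover have "a = (2*m-1-?r) + 2*m*nat(-(- int ?d - 1)-1)" using False ql by simp
      ultimately show ?thesis using rl by blast
    qed
  qed
  moreover have "finite ?X" using maya_fin assms(2) by auto
  ultimately show ?thesis using finite_subset by blast
qed

definition wt :: "nat set \<Rightarrow> nat" where "wt A = (\<Sum>a\<in>A. 2*a+1)"

definition W :: "nat \<Rightarrow> nat \<Rightarrow> int set \<Rightarrow> int" where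
  "W m r T = (\<Sum>k\<in>PP T. 4*int m*k + (2*int r+1)) + (\<Sum>k\<in>NN T. -4*int m*k - (2*int r+1))"

lemma sum_split_2m: fixes G :: "nat \<Rightarrow> int"
  shows "(\<Sum>q<2*m. G q) = (\<Sum>r<m. G r + G (2*m-1-r))"
proof -
  have U: "{..<2*m} = {..<m} \<union> (\<lambda>r. 2*m-1-r) ` {..<m}"
  proof (rule set_eqI)
    fix q show "q \<in> {..<2*m} \<longleftrightarrow> q \<in> {..<m} \<union> (\<lambda>r. 2*m-1-r) ` {..<m}"
    proof (cases "q < m")
      case False
      show ?thesis
      proof
        assume "q \<in> {..<2*m}" hence "q = 2*m-1-(2*m-1-q)" "2*m-1-q < m" using False by auto
        thus "q \<in> {..<m} \<union> (\<lambda>r. 2*m-1-r) ` {..<m}" by blast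
      qed auto
    qed auto
  qed
  have D: "{..<m} \<inter> (\<lambda>r. 2*m-1-r) ` {..<m} = {}" by auto
  have I: "inj_on (\<lambda>r. 2*m-1-r) {..<m}" by (auto simp: inj_on_def)
  have "(\<Sum>q<2*m. G q) = (\<Sum>r<m. G r) + (\<Sum>q\<in>(\<lambda>r. 2*m-1-r) ` {..<m}. G q)"
    unfolding U by (rule sum.union_disjoint) (use D in auto)
  also have "(\<Sum>q\<in>(\<lambda>r. 2*m-1-r) ` {..<m}. G q) = (\<Sum>r<m. G (2*m-1-r))"
    by (subst sum.reindex[OF I]) (simp add: comp_def)
  finally show ?thesis by (simp add: sum.distrib)
qed

lemma W_pos: assumes "finite A" "m > 0" "r < m"
  shows "(\<Sum>a\<in>{a\<in>A. a mod (2*m) = r}. 2*int a+1) = (\<Sum>k\<in>PP (runner m A r). 4*int m*k + (2*int r+1))"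
proof -
  let ?S = "{a\<in>A. a mod (2*m) = r}" and ?f = "\<lambda>a. int (a div (2*m))"
  have I: "inj_on ?f ?S"
  proof (rule inj_onI)
    fix a b assume "a \<in> ?S" "b \<in> ?S" "?f a = ?f b"
    hence "a mod (2*m) = b mod (2*m)" "a div (2*m) = b div (2*m)" by auto
    thus "a = b" by (metis div_mult_mod_eq)
  qed
  have rl: "r < 2*m" using assms by simp
  have Im: "PP (runner m A r) = ?f ` ?S"
  proof (rule set_eqI)
    fix k
    show "k \<in> PP (runner m A r) \<longleftrightarrow> k \<in> ?f ` ?S"
    proof
      assume k: "k \<in> PP (runner m A r)"
      hence k0: "k \<ge> 0" and mk: "mem A (int r + 2*int m*k)" unfolding PP_def runner_def by auto
      let ?a = "r + 2*m*nat k"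
      have e: "int r + 2*int m*k = int ?a" using k0 by simp
      have "?a \<in> A" using mk unfolding e mem_nat .
      moreover have "?a mod (2*m) = r" "?a div (2*m) = nat k" using modr[OF rl] by auto
      ultimately show "k \<in> ?f ` ?S" using k0 by (auto intro!: image_eqI[of _ _ ?a])
    next
      assume "k \<in> ?f ` ?S"
      then obtain a where a: "a \<in> A" "a mod (2*m) = r" and ka: "k = ?f a" by auto
      have "int a = int r + 2*int m*k" using decomp[of a m] a ka by simp
      thus "k \<in> PP (runner m A r)" using a ka unfolding PP_def runner_def
        by (simp add: mem_nat[symmetric])
    qed
  qed
  have "(\<Sum>k\<in>PP (runner m A r). 4*int m*k + (2*int r+1)) = (\<Sum>a\<in>?S. 4*int m*?f a + (2*int r+1))"
    unfolding Im by (subst sum.reindex[OF I]) (simp add: comp_def)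
  also have "\<dots> = (\<Sum>a\<in>?S. 2*int a+1)"
  proof (rule sum.cong[OF refl])
    fix a assume "a \<in> ?S"
    thus "4*int m*?f a + (2*int r+1) = 2*int a+1" using decomp[of a m] by simp
  qed
  finally show ?thesis by simp
qed

lemma W_neg: assumes "finite A" "m > 0" "r < m"
  shows "(\<Sum>a\<in>{a\<in>A. a mod (2*m) = 2*m-1-r}. 2*int a+1) = (\<Sum>k\<in>NN (runner m A r). -4*int m*k - (2*int r+1))"
proof -
  let ?S = "{a\<in>A. a mod (2*m) = 2*m-1-r}" and ?f = "\<lambda>a. - int (a div (2*m)) - 1"
  have I: "inj_on ?f ?S"
  proof (rule inj_onI)
    fix a b assume "a \<in> ?S" "b \<in> ?S" "?f a = ?f b"
    hence "a mod (2*m) = b mod (2*m)" "a div (2*m) = b div (2*m)" by auto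
    thus "a = b" by (metis div_mult_mod_eq)
  qed
  have rl: "2*m-1-r < 2*m" using assms by simp
  have Im: "NN (runner m A r) = ?f ` ?S"
  proof (rule set_eqI)
    fix k
    show "k \<in> NN (runner m A r) \<longleftrightarrow> k \<in> ?f ` ?S"
    proof
      assume k: "k \<in> NN (runner m A r)"
      hence k0: "k < 0" and mk: "\<not> mem A (int r + 2*int m*k)" unfolding NN_def runner_def by auto
      let ?a = "(2*m-1-r) + 2*m*nat (-k-1)"
      have e: "-1 - (int r + 2*int m*k) = int ?a" using k0 assms by (simp add: of_nat_diff algebra_simps)
      have "mem A (-1 - (int r + 2*int m*k))" using mk by (simp add: mem_neg)
      hence "?a \<in> A" unfolding e mem_nat .
      moreover have "?a mod (2*m) = 2*m-1-r" "?a div (2*m) = nat (-k-1)" using modr[OF rl] by auto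
      ultimately show "k \<in> ?f ` ?S" using k0 by (auto intro!: image_eqI[of _ _ ?a])
    next
      assume "k \<in> ?f ` ?S"
      then obtain a where a: "a \<in> A" "a mod (2*m) = 2*m-1-r" and ka: "k = ?f a" by auto
      have "int a = int (2*m-1-r) + 2*int m*int (a div (2*m))" using decomp[of a m] a by simp
      hence "-1 - int a = int r + 2*int m*k" unfolding ka using assms by (simp add: of_nat_diff algebra_simps)
      hence "\<not> mem A (int r + 2*int m*k)" using a by (metis mem_nat mem_neg)
      thus "k \<in> NN (runner m A r)" using ka unfolding NN_def runner_def by simp
    qed
  qed
  have "(\<Sum>k\<in>NN (runner m A r). -4*int m*k - (2*int r+1)) = (\<Sum>a\<in>?S. -4*int m*?f a - (2*int r+1))"
    unfolding Im by (subst sum.reindex[OF I]) (simp add: comp_def)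
  also have "\<dots> = (\<Sum>a\<in>?S. 2*int a+1)"
  proof (rule sum.cong[OF refl])
    fix a assume "a \<in> ?S"
    hence "int a = int (2*m-1-r) + 2*int m*int (a div (2*m))" using decomp[of a m] by simp
    thus "-4*int m*?f a - (2*int r+1) = 2*int a+1" using assms by (simp add: of_nat_diff algebra_simps)
  qed
  finally show ?thesis by simp
qed

lemma wt_runner: assumes "finite A" "m > 0"
  shows "int (wt A) = (\<Sum>r<m. W m r (runner m A r))"
proof -
  have "int (wt A) = (\<Sum>a\<in>A. 2*int a+1)" unfolding wt_def by (simp add: add.commute)
  also have "\<dots> = (\<Sum>q<2*m. \<Sum>a\<in>{a\<in>A. a mod (2*m) = q}. 2*int a+1)"
    by (rule sum.group[symmetric]) (use assms in auto)
  also have "\<dots> = (\<Sum>r<m. (\<Sum>a\<in>{a\<in>A. a mod (2*m) = r}. 2*int a+1) + (\<Sum>a\<in>{a\<in>A. a mod (2*m) = 2*m-1-r}. 2*int a+1))"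
    by (rule sum_split_2m)
  also have "\<dots> = (\<Sum>r<m. W m r (runner m A r))"
  proof (rule sum.cong[OF refl])
    fix r assume "r \<in> {..<m}"
    hence r: "r < m" by simp
    show "(\<Sum>a\<in>{a\<in>A. a mod (2*m) = r}. 2*int a+1) + (\<Sum>a\<in>{a\<in>A. a mod (2*m) = 2*m-1-r}. 2*int a+1) = W m r (runner m A r)"
      unfolding W_def W_pos[OF assms r] W_neg[OF assms r] ..
  qed
  finally show ?thesis .
qed

lemma W_gg: assumes "maya T" shows "W m r T = 4*int m * gg T + (2*int r+1) * ch T"
proof -
  have f: "finite (PP T)" "finite (NN T)" using maya_fin[OF assms] by auto
  have a: "(\<Sum>k\<in>PP T. 4*int m*k + (2*int r+1)) = 4*int m*(\<Sum>k\<in>PP T. k) + (2*int r+1)*int(card(PP T))"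
    by (simp add: sum.distrib sum_distrib_left)
  have b: "(\<Sum>k\<in>NN T. -4*int m*k - (2*int r+1)) = 4*int m*(\<Sum>k\<in>NN T. -k) - (2*int r+1)*int(card(NN T))"
  proof -
    have "(\<Sum>k\<in>NN T. -4*int m*k - (2*int r+1)) = (\<Sum>k\<in>NN T. 4*int m*(-k)) - (\<Sum>k\<in>NN T. (2*int r+1))"
      by (simp add: sum_subtractf)
    moreover have "(\<Sum>k\<in>NN T. 4*int m*(-k)) = 4*int m*(\<Sum>k\<in>NN T. -k)"
      by (rule sum_distrib_left[symmetric])
    ultimately show ?thesis by simp
  qed
  show ?thesis unfolding W_def gg_def ch_def a b by (simp add: algebra_simps)
qed

lemma gg_ee: "gg T = ee T + ch T * (ch T - 1) div 2" unfolding ee_def by simp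

definition swapF :: "(nat \<Rightarrow> int set) \<Rightarrow> nat \<Rightarrow> nat \<Rightarrow> nat \<Rightarrow> int set" where
  "swapF F r0 r1 = F(r0 := shift (ch (F r0) - ch (F r1)) (F r1), r1 := shift (ch (F r1) - ch (F r0)) (F r0))"

definition sig :: "nat \<Rightarrow> nat \<Rightarrow> nat \<Rightarrow> nat set \<Rightarrow> nat set" where
  "sig m r0 r1 A = fromT m (swapF (runner m A) r0 r1)"

lemma sum_swap2: assumes "finite S" "r0 \<in> S" "r1 \<in> S" "r0 \<noteq> r1"
  "\<And>r. r \<in> S \<Longrightarrow> r \<noteq> r0 \<Longrightarrow> r \<noteq> r1 \<Longrightarrow> f r = g r"
  "f r0 + f r1 = g r0 + (g r1 :: int)"
  shows "sum f S = sum g S"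
proof -
  have "sum f S = f r0 + f r1 + sum f (S - {r0} - {r1})"
    using assms by (simp add: sum.remove[of S r0] sum.remove[of "S - {r0}" r1])
  moreover have "sum g S = g r0 + g r1 + sum g (S - {r0} - {r1})"
    using assms by (simp add: sum.remove[of S r0] sum.remove[of "S - {r0}" r1])
  moreover have "sum f (S - {r0} - {r1}) = sum g (S - {r0} - {r1})"
    using assms by (intro sum.cong) auto
  ultimately show ?thesis using assms(6) by simp
qed

locale swp =
  fixes m r0 r1 :: nat
  assumes m: "m > 0" and r0: "r0 < m" and r1: "r1 < m" and ne: "r0 \<noteq> r1"
begin

lemma maya_swapF: assumes "\<And>r. r < m \<Longrightarrow> maya (F r)" "r < m" shows "maya (swapF F r0 r1 r)"
  unfolding swapF_def using assms r0 r1 by (auto intro: maya_shift)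

lemma finite_sig: assumes "finite A" shows "finite (sig m r0 r1 A)"
  unfolding sig_def by (rule finite_fromT[OF m]) (intro maya_swapF maya_runner[OF assms m])

lemma runner_sig: assumes "r < m" shows "runner m (sig m r0 r1 A) r = swapF (runner m A) r0 r1 r"
  unfolding sig_def by (rule runner_fromT[OF m assms])

lemma swapF_cong: assumes "\<And>r. r < m \<Longrightarrow> F r = G r" "r < m"
  shows "swapF F r0 r1 r = swapF G r0 r1 r"
  unfolding swapF_def using assms r0 r1 by auto

lemma swapF_swapF: assumes "\<And>r. r < m \<Longrightarrow> maya (F r)"
  shows "swapF (swapF F r0 r1) r0 r1 = F"
proof -
  let ?c0 = "ch (F r0)" and ?c1 = "ch (F r1)"
  have G0: "swapF F r0 r1 r0 = shift (?c0 - ?c1) (F r1)" and G1: "swapF F r0 r1 r1 = shift (?c1 - ?c0) (F r0)"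
    unfolding swapF_def using ne by auto
  have ch0: "ch (swapF F r0 r1 r0) = ?c0" unfolding G0 using shift_gen[OF assms[OF r1]] by simp
  have ch1: "ch (swapF F r0 r1 r1) = ?c1" unfolding G1 using shift_gen[OF assms[OF r0]] by simp
  show ?thesis
  proof
    fix r
    show "swapF (swapF F r0 r1) r0 r1 r = F r"
    proof (cases "r = r0")
      case True
      then show ?thesis unfolding swapF_def[of "swapF F r0 r1"] using ne ch0 ch1
        by (simp add: G1 shift_shift shift_0)
    next
      case False
      then show ?thesis
      proof (cases "r = r1")
        case True
        then show ?thesis unfolding swapF_def[of "swapF F r0 r1"] using ne ch0 ch1
          by (simp add: G0 shift_shift shift_0)
      next
        case False
        then show ?thesis using \<open>r \<noteq> r0\<close> unfolding swapF_def by simp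
      qed
    qed
  qed
qed

lemma sig_sig: assumes "finite A" shows "sig m r0 r1 (sig m r0 r1 A) = A"
proof -
  have "sig m r0 r1 (sig m r0 r1 A) = fromT m (swapF (swapF (runner m A) r0 r1) r0 r1)"
    unfolding sig_def[of m r0 r1 "sig m r0 r1 A"]
    by (rule fromT_cong[OF m], rule swapF_cong) (auto simp: runner_sig)
  also have "\<dots> = fromT m (runner m A)"
    by (subst swapF_swapF) (auto intro: maya_runner[OF assms m])
  finally show ?thesis using fromT_runner[OF m] by simp
qed

lemma desc_sig: assumes "finite A" shows "desc (runner m (sig m r0 r1 A) r0) = desc (runner m A r1)"
  using runner_sig[OF r0] unfolding swapF_def by (simp add: desc_shift)

lemma wt_sig: assumes "finite A" shows "wt (sig m r0 r1 A) = wt A"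
proof -
  let ?F = "runner m A" let ?G = "swapF ?F r0 r1"
  have mF: "\<And>r. maya (?F r)" using maya_runner[OF assms m] by auto
  have mG: "\<And>r. r < m \<Longrightarrow> maya (?G r)" using maya_swapF mF by auto
  let ?c0 = "ch (?F r0)" and ?c1 = "ch (?F r1)"
  have G0: "?G r0 = shift (?c0 - ?c1) (?F r1)" and G1: "?G r1 = shift (?c1 - ?c0) (?F r0)"
    unfolding swapF_def using ne by auto
  have ch0: "ch (?G r0) = ?c0" "ee (?G r0) = ee (?F r1)" unfolding G0 using shift_gen[OF mF] by simp_all
  have ch1: "ch (?G r1) = ?c1" "ee (?G r1) = ee (?F r0)" unfolding G1 using shift_gen[OF mF] by simp_all
  have "int (wt (sig m r0 r1 A)) = (\<Sum>r<m. W m r (runner m (sig m r0 r1 A) r))"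
    by (rule wt_runner[OF finite_sig[OF assms] m])
  also have "\<dots> = (\<Sum>r<m. W m r (?G r))"
    by (rule sum.cong) (auto simp: runner_sig)
  also have "\<dots> = (\<Sum>r<m. W m r (?F r))"
  proof (rule sum_swap2)
    show "W m r (?G r) = W m r (?F r)" if "r \<in> {..<m}" "r \<noteq> r0" "r \<noteq> r1" for r
      using that unfolding swapF_def by simp
    show "W m r0 (?G r0) + W m r1 (?G r1) = W m r0 (?F r0) + W m r1 (?F r1)"
      unfolding W_gg[OF mG[OF r0]] W_gg[OF mG[OF r1]] W_gg[OF mF] gg_ee ch0 ch1
      by (simp add: algebra_simps)
  qed (use r0 r1 ne in auto)
  also have "\<dots> = int (wt A)" by (rule wt_runner[OF assms m, symmetric])
  finally show ?thesis by simp
qed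

end






definition h :: "nat \<Rightarrow> nat set \<Rightarrow> nat" where
  "h m A = card {u. mem A u \<and> mem A (2*int m - 1 - u)}"

lemma mem_refl: "mem A (c - 1 - u) \<longleftrightarrow> \<not> mem A (u - c)"
  using mem_neg[of A "u - c"] by (simp add: algebra_simps)

lemma imod: assumes "0 \<le> q" "q < n" shows "(q + n*k) mod n = (q::int)" "(q + n*k) div n = k"
  using assms by (simp_all add: mod_pos_pos_trivial)

lemma h_runner: assumes "finite A" "m > 0"
  shows "h m A = 2 * (\<Sum>r<m. desc (runner m A r))"
proof -
  let ?M = "2*int m"
  define H where "H = {u. mem A u \<and> mem A (?M - 1 - u)}"
  obtain N where N: "\<And>a. a \<in> A \<Longrightarrow> a < N" using assms(1) finite_nat_set_iff_bounded by auto
  have fH: "finite H"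
  proof -
    have "H \<subseteq> {- int N - ?M .. int N}"
    proof
      fix u assume u: "u \<in> H"
      have "u \<le> int N"
      proof (rule ccontr)
        assume "\<not> u \<le> int N"
        hence "u \<ge> 0" "nat u \<ge> N" by auto
        thus False using u N unfolding H_def mem_def by force
      qed
      moreover have "u \<ge> - int N - ?M"
      proof (rule ccontr)
        assume "\<not> u \<ge> - int N - ?M"
        hence "?M - 1 - u \<ge> 0" "nat (?M - 1 - u) \<ge> N" by auto
        thus False using u N unfolding H_def mem_def by force
      qed
      ultimately show "u \<in> {- int N - ?M .. int N}" by simp
    qed
    thus ?thesis using finite_subset by blast
  qed
  have Mp: "?M > 0" using assms by simp
  define H1 where "H1 = {u\<in>H. u mod ?M < int m}"
  define H2 where "H2 = {u\<in>H. \<not> u mod ?M < int m}"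
  have iota: "(?M - 1 - u) mod ?M = ?M - 1 - u mod ?M" for u
  proof -
    have c: "?M - 1 - u = (?M - 1 - u mod ?M) + ?M * (- (u div ?M))"
      using mult_div_mod_eq[of ?M u] mult_minus_right[of ?M "u div ?M"] by linarith
    have b: "0 \<le> ?M - 1 - u mod ?M" "?M - 1 - u mod ?M < ?M"
      using pos_mod_bound[OF Mp, of u] pos_mod_sign[OF Mp, of u] by linarith+
    have "(?M - 1 - u) mod ?M = ((?M - 1 - u mod ?M) + ?M * (- (u div ?M))) mod ?M"
      by (rule arg_cong[where f="\<lambda>x. x mod ?M"], rule c)
    also have "\<dots> = ?M - 1 - u mod ?M" by (rule imod(1)[OF b])
    finally show ?thesis .
  qed
  have Hsym: "u \<in> H \<Longrightarrow> ?M - 1 - u \<in> H" for u unfolding H_def by simp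
  have H2im: "H2 = (\<lambda>u. ?M - 1 - u) ` H1"
  proof (rule set_eqI)
    fix u show "u \<in> H2 \<longleftrightarrow> u \<in> (\<lambda>u. ?M - 1 - u) ` H1"
    proof
      assume u: "u \<in> H2"
      hence "?M - 1 - u \<in> H1" unfolding H1_def H2_def using iota[of u] Hsym by auto
      thus "u \<in> (\<lambda>u. ?M - 1 - u) ` H1" by (auto intro!: image_eqI[of _ _ "?M - 1 - u"])
    next
      assume "u \<in> (\<lambda>u. ?M - 1 - u) ` H1"
      then obtain v where v: "v \<in> H1" "u = ?M - 1 - v" by auto
      thus "u \<in> H2" unfolding H1_def H2_def using iota[of v] Hsym by auto
    qed
  qed
  have inj: "inj_on (\<lambda>u. ?M - 1 - u) X" for X by (auto simp: inj_on_def)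
  have "card H = card H1 + card H2"
  proof -
    have "H = H1 \<union> H2" "H1 \<inter> H2 = {}" unfolding H1_def H2_def by auto
    thus ?thesis using fH by (simp add: card_Un_disjoint)
  qed
  also have "card H2 = card H1" unfolding H2im by (rule card_image[OF inj])
  finally have cH: "card H = 2 * card H1" by simp
  have fH1: "finite H1" using fH unfolding H1_def by simp
  have "card H1 = (\<Sum>r<m. card {u\<in>H1. nat (u mod ?M) = r})"
  proof -
    have "card H1 = (\<Sum>u\<in>H1. 1)" by simp
    also have "\<dots> = (\<Sum>r<m. \<Sum>u\<in>{u\<in>H1. nat (u mod ?M) = r}. 1)"
      by (rule sum.group[symmetric]) (use fH1 pos_mod_sign[OF Mp] in \<open>auto simp: H1_def nat_less_iff\<close>)
    finally show ?thesis by simp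
  qed
  also have "\<dots> = (\<Sum>r<m. desc (runner m A r))"
  proof (rule sum.cong[OF refl])
    fix r assume "r \<in> {..<m}"
    hence r: "r < m" by simp
    let ?T = "runner m A r"
    have "{u\<in>H1. nat (u mod ?M) = r} = (\<lambda>k. int r + ?M*k) ` {k. k \<in> ?T \<and> k - 1 \<notin> ?T}"
    proof (rule set_eqI)
      fix u
      show "u \<in> {u\<in>H1. nat (u mod ?M) = r} \<longleftrightarrow> u \<in> (\<lambda>k. int r + ?M*k) ` {k. k \<in> ?T \<and> k - 1 \<notin> ?T}"
      proof
        assume u: "u \<in> {u\<in>H1. nat (u mod ?M) = r}"
        have um: "u mod ?M = int r" using u pos_mod_sign[OF Mp, of u] by auto
        have ud: "u = int r + ?M * (u div ?M)" using um mult_div_mod_eq[of ?M u] by linarith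
        have e2: "u - ?M = int r + 2 * int m * (u div ?M - 1)" using ud by (simp add: algebra_simps)
        have "mem A u" using u unfolding H1_def H_def by simp
        hence "u div ?M \<in> ?T" unfolding runner_def using ud by simp
        moreover have "u div ?M - 1 \<notin> ?T"
        proof -
          have "\<not> mem A (u - ?M)" using u mem_refl[of A ?M u] unfolding H1_def H_def by simp
          thus ?thesis unfolding runner_def e2 by simp
        qed
        ultimately show "u \<in> (\<lambda>k. int r + ?M*k) ` {k. k \<in> ?T \<and> k - 1 \<notin> ?T}"
          using ud by (auto intro!: image_eqI[of _ _ "u div ?M"])
      next
        assume "u \<in> (\<lambda>k. int r + ?M*k) ` {k. k \<in> ?T \<and> k - 1 \<notin> ?T}"
        then obtain k where k: "k \<in> ?T" "k - 1 \<notin> ?T" "u = int r + ?M*k" by auto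
        have um: "u mod ?M = int r" using k(3) imod[of "int r" ?M k] r by simp
        have e2: "u - ?M = int r + 2 * int m * (k - 1)" using k(3) by (simp add: algebra_simps)
        have "mem A u" using k unfolding runner_def by simp
        moreover have "mem A (?M - 1 - u)"
        proof -
          have "\<not> mem A (u - ?M)" using k(2) unfolding runner_def e2 by simp
          thus ?thesis using mem_refl[of A ?M u] by simp
        qed
        ultimately show "u \<in> {u\<in>H1. nat (u mod ?M) = r}" unfolding H1_def H_def using um r by simp
      qed
    qed
    moreover have "inj (\<lambda>k. int r + ?M*k)" using Mp by (auto simp: inj_on_def)
    ultimately show "card {u\<in>H1. nat (u mod ?M) = r} = desc ?T"
      unfolding desc_def by (simp add: card_image inj_on_subset)
  qed
  finally show ?thesis unfolding h_def using cH H_def by simp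
qed

definition DD :: "nat \<Rightarrow> nat set set" where "DD n = {A. finite A \<and> wt A = n}"

lemma finite_DD: "finite (DD n)"
proof -
  have "DD n \<subseteq> Pow {..n}"
  proof
    fix A assume A: "A \<in> DD n"
    have "a \<le> n" if "a \<in> A" for a
    proof -
      have "2*a+1 \<le> wt A" unfolding wt_def using A that by (intro member_le_sum) (auto simp: DD_def)
      thus ?thesis using A by (simp add: DD_def)
    qed
    thus "A \<in> Pow {..n}" by auto
  qed
  thus ?thesis using finite_subset by blast
qed


lemma desc_sum_eq: assumes "m > 0" "r < m"
  shows "(\<Sum>A\<in>DD n. desc (runner m A r)) = (\<Sum>A\<in>DD n. desc (runner m A 0))"
proof (cases "r = 0")
  case True then show ?thesis by simp
next
  case False
  interpret swp m 0 r using assms False by unfold_locales auto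
  have bij: "bij_betw (sig m 0 r) (DD n) (DD n)"
  proof (rule bij_betw_byWitness[where f'="sig m 0 r"])
    show "\<forall>a\<in>DD n. sig m 0 r (sig m 0 r a) = a" using sig_sig unfolding DD_def by blast
    show "\<forall>a\<in>DD n. sig m 0 r (sig m 0 r a) = a" using sig_sig unfolding DD_def by blast
    show "sig m 0 r ` DD n \<subseteq> DD n" using finite_sig wt_sig unfolding DD_def by auto
    show "sig m 0 r ` DD n \<subseteq> DD n" using finite_sig wt_sig unfolding DD_def by auto
  qed
  have "(\<Sum>A\<in>DD n. desc (runner m A r)) = (\<Sum>A\<in>DD n. desc (runner m (sig m 0 r A) 0))"
    by (rule sum.cong[OF refl]) (simp add: DD_def desc_sig)
  also have "\<dots> = (\<Sum>A\<in>DD n. desc (runner m A 0))"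
    using sum.reindex_bij_betw[OF bij, of "\<lambda>A. desc (runner m A 0)"] by simp
  finally show ?thesis .
qed


theorem P3_main: assumes "m > 0" shows "2*m dvd (\<Sum>A\<in>DD n. h m A)"
proof -
  have "(\<Sum>A\<in>DD n. h m A) = (\<Sum>A\<in>DD n. 2 * (\<Sum>r<m. desc (runner m A r)))"
    by (rule sum.cong[OF refl]) (simp add: DD_def h_runner assms)
  also have "\<dots> = 2 * (\<Sum>A\<in>DD n. \<Sum>r<m. desc (runner m A r))"
    by (rule sum_distrib_left[symmetric])
  also have "\<dots> = 2 * (\<Sum>r<m. \<Sum>A\<in>DD n. desc (runner m A r))"
    by (subst sum.swap) (rule refl)
  also have "\<dots> = 2 * (\<Sum>r<m. \<Sum>A\<in>DD n. desc (runner m A 0))"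
    by (rule arg_cong[where f="\<lambda>x. 2*x"], rule sum.cong[OF refl], rule desc_sum_eq[OF assms]) simp
  also have "\<dots> = 2*m * (\<Sum>A\<in>DD n. desc (runner m A 0))" by simp
  finally have "(\<Sum>A\<in>DD n. h m A) = 2*m * (\<Sum>A\<in>DD n. desc (runner m A 0))" .
  thus ?thesis by (rule dvdI)
qed




definition SYM :: "(nat \<Rightarrow> nat) \<Rightarrow> bool" where
  "SYM L \<longleftrightarrow> (\<forall>i j. j < L i \<longleftrightarrow> i < L j)"

lemma SYM_D: "SYM L \<Longrightarrow> j < L i \<longleftrightarrow> i < L j" unfolding SYM_def by blast

lemma SYM_mono: assumes "SYM L" "i \<le> i'" shows "L i' \<le> L i"
proof (rule ccontr)
  assume "\<not> L i' \<le> L i"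
  hence "L i < L i'" by simp
  hence "i' < L (L i)" using SYM_D[OF assms(1)] by blast
  hence "i < L (L i)" using assms(2) by simp
  hence "L i < L i" using SYM_D[OF assms(1)] by blast
  thus False by simp
qed

lemma downclosed_card: assumes "finite S" "\<And>x y. x \<in> S \<Longrightarrow> y < x \<Longrightarrow> y \<in> S"
  shows "S = {..<card S}"
proof -
  have sub: "S \<subseteq> {..<card S}"
  proof
    fix x assume x: "x \<in> S"
    have "{..x} \<subseteq> S" using assms(2)[OF x] x by (auto simp: le_less)
    hence "card {..x} \<le> card S" using assms(1) by (rule card_mono[rotated])
    thus "x \<in> {..<card S}" by simp
  qed
  moreover have "card {..<card S} = card S" by simp
  ultimately show ?thesis using card_subset_eq[of "{..<card S}" S] by simp
qed

definition fa :: "nat set \<Rightarrow> nat \<Rightarrow> nat" where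
  "fa A k = rev (sorted_list_of_set A) ! k"

lemma fa_facts: assumes "finite A"
  shows "\<And>k k'. k < k' \<Longrightarrow> k' < card A \<Longrightarrow> fa A k' < fa A k"
    and "fa A ` {..<card A} = A"
proof -
  let ?l = "rev (sorted_list_of_set A)"
  have len: "length ?l = card A" using assms by simp
  have sw: "sorted_wrt (\<lambda>x y. y < x) ?l"
    using strict_sorted_list_of_set[of A] by (simp add: sorted_wrt_rev)
  show "fa A k' < fa A k" if "k < k'" "k' < card A" for k k'
    using sw that len unfolding fa_def sorted_wrt_iff_nth_less by auto
  have "fa A ` {..<card A} = set ?l" unfolding fa_def using len by (auto simp: set_conv_nth)
  thus "fa A ` {..<card A} = A" using assms by simp
qed

lemma fa_step: assumes "finite A" "k \<le> k'" "k' < card A" shows "fa A k' + (k' - k) \<le> fa A k"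
  using assms(2,3)
proof (induction k' rule: dec_induct)
  case base then show ?case by simp
next
  case (step n)
  have "fa A (Suc n) < fa A n" using fa_facts(1)[OF assms(1)] step by simp
  moreover have "fa A n + (n - k) \<le> fa A k" using step by simp
  ultimately show ?case using step by simp
qed

definition fcell :: "nat set \<Rightarrow> nat \<Rightarrow> nat \<Rightarrow> bool" where
  "fcell A i j \<longleftrightarrow> min i j < card A \<and> max i j \<le> min i j + fa A (min i j)"

definition LA :: "nat set \<Rightarrow> nat \<Rightarrow> nat" where
  "LA A i = card {j. fcell A i j}"

lemma fcell_sym: "fcell A i j \<longleftrightarrow> fcell A j i"
  unfolding fcell_def by (simp add: min.commute max.commute)

lemma fcell_down: assumes "finite A" "fcell A i j" "j' < j" shows "fcell A i j'"
proof (cases "i \<le> j")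
  case True
  show ?thesis
  proof (cases "i \<le> j'")
    case True
    then show ?thesis using assms \<open>i \<le> j\<close> unfolding fcell_def by auto
  next
    case False
    have i: "i < card A" "j \<le> i + fa A i" using assms True unfolding fcell_def by auto
    have "fa A i + (i - j') \<le> fa A j'" using fa_step[OF assms(1), of j' i] False i by simp
    then show ?thesis using False i unfolding fcell_def by auto
  qed
next
  case False
  have j: "j < card A" "i \<le> j + fa A j" using assms False unfolding fcell_def by auto
  have "fa A j + (j - j') \<le> fa A j'" using fa_step[OF assms(1), of j' j] j assms(3) by simp
  then show ?thesis using False j assms(3) unfolding fcell_def by auto
qed

lemma fcell_fin: "finite {j. fcell A i j}"
proof -
  have "{j. fcell A i j} \<subseteq> {..max i (card A + Max (fa A ` {..<card A}))}"
  proof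
    fix j assume "j \<in> {j. fcell A i j}"
    hence c: "min i j < card A" "max i j \<le> min i j + fa A (min i j)" unfolding fcell_def by auto
    have "fa A (min i j) \<le> Max (fa A ` {..<card A})" using c(1) by (intro Max_ge) auto
    moreover have "j \<le> min i j + fa A (min i j)" using c(2) by simp
    ultimately have "j \<le> card A + Max (fa A ` {..<card A})" using c(1) by linarith
    thus "j \<in> {..max i (card A + Max (fa A ` {..<card A}))}" by simp
  qed
  thus ?thesis using finite_subset by blast
qed

lemma LA_row: assumes "finite A" shows "{j. fcell A i j} = {..<LA A i}"
  unfolding LA_def by (rule downclosed_card[OF fcell_fin]) (use fcell_down[OF assms] in blast)

lemma SYM_LA: assumes "finite A" shows "SYM (LA A)"
  unfolding SYM_def
proof (intro allI)
  fix i j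
  have "j < LA A i \<longleftrightarrow> fcell A i j" using LA_row[OF assms, of i] by blast
  also have "\<dots> \<longleftrightarrow> fcell A j i" by (rule fcell_sym)
  also have "\<dots> \<longleftrightarrow> i < LA A j" using LA_row[OF assms, of j] by blast
  finally show "j < LA A i \<longleftrightarrow> i < LA A j" .
qed

lemma fa_inj: assumes "finite A" shows "inj_on (fa A) {..<card A}"
proof (rule inj_onI)
  fix k k' assume "k \<in> {..<card A}" "k' \<in> {..<card A}" "fa A k = fa A k'"
  thus "k = k'" using fa_facts(1)[OF assms, of k k'] fa_facts(1)[OF assms, of k' k]
    by (cases k k' rule: linorder_cases) auto
qed

lemma LA_val: assumes "finite A" "i < card A" shows "LA A i = i + fa A i + 1"
proof -
  have "{j. fcell A i j} = {..i + fa A i}"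
  proof (rule set_eqI)
    fix j show "j \<in> {j. fcell A i j} \<longleftrightarrow> j \<in> {..i + fa A i}"
    proof (cases "i \<le> j")
      case True then show ?thesis using assms unfolding fcell_def by auto
    next
      case False
      have "fa A i + (i - j) \<le> fa A j" using fa_step[OF assms(1), of j i] False assms by simp
      then show ?thesis using False assms unfolding fcell_def by auto
    qed
  qed
  thus ?thesis unfolding LA_def by simp
qed

lemma LA_small: assumes "finite A" "card A \<le> i" shows "LA A i \<le> i"
proof -
  have "{j. fcell A i j} \<subseteq> {..<card A}" using assms unfolding fcell_def by (auto simp: min_def split: if_splits)
  hence "LA A i \<le> card {..<card A}" unfolding LA_def by (rule card_mono[OF finite_lessThan])
  thus ?thesis using assms by simp
qed

definition A_of :: "(nat \<Rightarrow> nat) \<Rightarrow> nat set" where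
  "A_of L = (\<lambda>i. L i - i - 1) ` {i. i < L i}"

lemma A_of_LA: assumes "finite A" shows "A_of (LA A) = A"
proof -
  have D: "{i. i < LA A i} = {..<card A}"
  proof (rule set_eqI)
    fix i show "i \<in> {i. i < LA A i} \<longleftrightarrow> i \<in> {..<card A}"
    proof (cases "i < card A")
      case True thus ?thesis using LA_val[OF assms True] by simp
    next
      case False thus ?thesis using LA_small[OF assms, of i] by simp
    qed
  qed
  have "A_of (LA A) = fa A ` {..<card A}"
    unfolding A_of_def D using LA_val[OF assms] by (intro image_cong) auto
  thus ?thesis using fa_facts(2)[OF assms] by simp
qed


lemma wt_LA: assumes "finite A" shows "(\<Sum>i<LA A 0. LA A i) = wt A"
proof -
  let ?d = "card A" and ?L = "LA A"
  define Sl where "Sl k = {k} \<times> {k..k + fa A k} \<union> {k<..k + fa A k} \<times> {k}" for k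
  have S: "(SIGMA i:{..<?L 0}. {j. fcell A i j}) = (\<Union>k\<in>{..<?d}. Sl k)"
  proof (rule set_eqI)
    fix p :: "nat \<times> nat"
    obtain i j where p: "p = (i, j)" by (cases p)
    have "p \<in> (SIGMA i:{..<?L 0}. {j. fcell A i j}) \<longleftrightarrow> fcell A i j"
    proof -
      have "i < ?L 0" if fc: "fcell A i j"
      proof -
        have "j < ?L i" using LA_row[OF assms, of i] fc by blast
        hence "0 < ?L i" by simp
        thus ?thesis using SYM_D[OF SYM_LA[OF assms], of 0 i] by simp
      qed
      thus ?thesis unfolding p by auto
    qed
    also have "\<dots> \<longleftrightarrow> (\<exists>k<?d. (i = k \<and> k \<le> j \<and> j \<le> k + fa A k) \<or> (j = k \<and> k < i \<and> i \<le> k + fa A k))"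
    proof (cases "i \<le> j")
      case True
      hence mm: "min i j = i" "max i j = j" by auto
      show ?thesis unfolding fcell_def mm using True by auto
    next
      case False
      hence mm: "min i j = j" "max i j = i" by auto
      show ?thesis unfolding fcell_def mm using False by auto
    qed
    also have "\<dots> \<longleftrightarrow> p \<in> (\<Union>k\<in>{..<?d}. Sl k)"
      unfolding p Sl_def by (simp add: Bex_def) blast
    finally show "p \<in> (SIGMA i:{..<?L 0}. {j. fcell A i j}) \<longleftrightarrow> p \<in> (\<Union>k\<in>{..<?d}. Sl k)" .
  qed
  have cS: "card (Sl k) = 2 * fa A k + 1" for k
  proof -
    have "card (Sl k) = card ({k} \<times> {k..k + fa A k}) + card ({k<..k + fa A k} \<times> {k})"
      unfolding Sl_def by (rule card_Un_disjoint) auto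
    thus ?thesis by (simp add: card_cartesian_product)
  qed
  have "(\<Sum>i<?L 0. ?L i) = (\<Sum>i<?L 0. card {j. fcell A i j})"
    using LA_row[OF assms] by simp
  also have "\<dots> = card (SIGMA i:{..<?L 0}. {j. fcell A i j})"
    by (rule card_SigmaI[symmetric]) (auto simp: fcell_fin)
  also have "\<dots> = card (\<Union>k\<in>{..<?d}. Sl k)" unfolding S ..
  also have "\<dots> = (\<Sum>k<?d. card (Sl k))"
  proof (rule card_UN_disjoint)
    show "finite {..<?d}" by simp
    show "\<forall>k\<in>{..<?d}. finite (Sl k)" unfolding Sl_def by simp
    have mn: "(a, b) \<in> Sl k \<Longrightarrow> min a b = k" for a b k unfolding Sl_def by auto
    show "\<forall>k\<in>{..<?d}. \<forall>k'\<in>{..<?d}. k \<noteq> k' \<longrightarrow> Sl k \<inter> Sl k' = {}"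
    proof (intro ballI impI)
      fix k k' :: nat assume ne: "k \<noteq> k'"
      show "Sl k \<inter> Sl k' = {}"
      proof (rule equals0I)
        fix p assume p: "p \<in> Sl k \<inter> Sl k'"
        obtain a b where "p = (a, b)" by (cases p)
        thus False using p mn[of a b k] mn[of a b k'] ne by auto
      qed
    qed
  qed
  also have "\<dots> = (\<Sum>k<?d. 2 * fa A k + 1)" using cS by simp
  also have "\<dots> = (\<Sum>a\<in>fa A ` {..<?d}. 2 * a + 1)"
    by (subst sum.reindex[OF fa_inj[OF assms]]) (simp add: comp_def)
  also have "\<dots> = wt A" unfolding wt_def fa_facts(2)[OF assms] ..
  finally show ?thesis .
qed

lemma card_of_dec: assumes dec: "\<And>k k'. k < k' \<Longrightarrow> k' < d \<Longrightarrow> f k' < (f k :: nat)"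
  shows "card (f ` {..<d}) = d"
proof -
  have inj: "inj_on f {..<d}"
  proof (rule inj_onI)
    fix a b assume "a \<in> {..<d}" "b \<in> {..<d}" "f a = f b"
    thus "a = b" using dec[of a b] dec[of b a] by (cases a b rule: linorder_cases) auto
  qed
  show ?thesis using card_image[OF inj] by simp
qed

lemma fa_of_dec: assumes dec: "\<And>k k'. k < k' \<Longrightarrow> k' < d \<Longrightarrow> f k' < (f k :: nat)" and kd: "k < d"
  shows "fa (f ` {..<d}) k = f k" and "card (f ` {..<d}) = d"
proof -
  have inj: "inj_on f {..<d}"
  proof (rule inj_onI)
    fix a b assume "a \<in> {..<d}" "b \<in> {..<d}" "f a = f b"
    thus "a = b" using dec[of a b] dec[of b a] by (cases a b rule: linorder_cases) auto
  qed
  show cd: "card (f ` {..<d}) = d" using card_image[OF inj] by simp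
  let ?l = "rev (map f [0..<d])"
  have sw: "sorted_wrt (<) ?l"
    by (subst sorted_wrt_rev) (auto simp: sorted_wrt_iff_nth_less intro: dec)
  have "sorted_list_of_set (f ` {..<d}) = ?l"
    using sorted_list_of_set_unique[of "f ` {..<d}" ?l] sw cd by (simp add: atLeast0LessThan)
  thus "fa (f ` {..<d}) k = f k" unfolding fa_def using kd by simp
qed


lemma SYM_pos: "SYM L \<Longrightarrow> 0 < L i \<longleftrightarrow> i < L 0" using SYM_D[of L 0 i] by simp

lemma SYM_diag: assumes "SYM L" shows "{i. i < L i} = {..<card {i. i < L i}}"
proof (rule downclosed_card)
  have "{i. i < L i} \<subseteq> {..<L 0}"
  proof
    fix i assume "i \<in> {i. i < L i}"
    hence "0 < L i" by simp
    thus "i \<in> {..<L 0}" using SYM_pos[OF assms, of i] by simp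
  qed
  thus "finite {i. i < L i}" using finite_subset by blast
  show "y \<in> {i. i < L i}" if "x \<in> {i. i < L i}" "y < x" for x y
    using that SYM_mono[OF assms, of y x] by simp
qed


lemma LA_A_of: assumes "SYM L" shows "LA (A_of L) = L"
proof -
  define d where "d = card {i. i < L i}"
  have D: "{i. i < L i} = {..<d}" using SYM_diag[OF assms] d_def by simp
  let ?x = "\<lambda>i. L i - i - 1"
  have dec: "?x k' < ?x k" if "k < k'" "k' < d" for k k'
  proof -
    have "k' \<in> {i. i < L i}" unfolding D using that by simp
    hence "k' < L k'" by simp
    moreover have "L k' \<le> L k" using SYM_mono[OF assms] that by simp
    ultimately show ?thesis using that by simp
  qed
  have A: "A_of L = ?x ` {..<d}" unfolding A_of_def D ..
  have cA: "card (A_of L) = d" unfolding A by (rule card_of_dec[OF dec])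
  have fa: "fa (A_of L) k = ?x k" if "k < d" for k unfolding A by (rule fa_of_dec(1)[OF dec that]) auto
  have fc: "fcell (A_of L) i j \<longleftrightarrow> j < L i" for i j
  proof (cases "i \<le> j")
    case True
    hence mm: "min i j = i" "max i j = j" by auto
    have "fcell (A_of L) i j \<longleftrightarrow> i < d \<and> j \<le> i + fa (A_of L) i" unfolding fcell_def mm cA ..
    also have "\<dots> \<longleftrightarrow> i < L i \<and> j \<le> i + ?x i"
    proof -
      have "i < d \<longleftrightarrow> i < L i" using D by blast
      thus ?thesis using fa[of i] by auto
    qed
    also have "\<dots> \<longleftrightarrow> j < L i" using True by auto
    finally show ?thesis .
  next
    case False
    hence mm: "min i j = j" "max i j = i" by auto
    have "fcell (A_of L) i j \<longleftrightarrow> j < d \<and> i \<le> j + fa (A_of L) j" unfolding fcell_def mm cA ..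
    also have "\<dots> \<longleftrightarrow> j < L j \<and> i \<le> j + ?x j"
    proof -
      have "j < d \<longleftrightarrow> j < L j" using D by blast
      thus ?thesis using fa[of j] by auto
    qed
    also have "\<dots> \<longleftrightarrow> i < L j" using False by auto
    also have "\<dots> \<longleftrightarrow> j < L i" using SYM_D[OF assms] by blast
    finally show ?thesis .
  qed
  show ?thesis
  proof
    fix i show "LA (A_of L) i = L i" unfolding LA_def fc by simp
  qed
qed


lemma finite_A_of: assumes "SYM L" shows "finite (A_of L)"
proof -
  have "{i. i < L i} = {..<card {i. i < L i}}" by (rule SYM_diag[OF assms])
  hence "finite {i. i < L i}" by (metis finite_lessThan)
  thus ?thesis unfolding A_of_def by simp
qed

lemma wt_A_of: assumes "SYM L" shows "wt (A_of L) = (\<Sum>i<L 0. L i)"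
  using wt_LA[OF finite_A_of[OF assms]] unfolding LA_A_of[OF assms] by simp

definition NH :: "(nat \<Rightarrow> nat) \<Rightarrow> nat \<Rightarrow> nat" where
  "NH L t = card {(i, j). j < L i \<and> (L i - (j+1)) + (L j - (i+1)) + 1 = t}"

locale symL =
  fixes L :: "nat \<Rightarrow> nat"
  assumes sym: "SYM L"
begin

definition x :: "nat \<Rightarrow> int" where "x i = int (L i) - int i - 1"

lemma x_mono: "k \<le> k' \<Longrightarrow> x k' + (int k' - int k) \<le> x k"
  using SYM_mono[OF sym, of k k'] unfolding x_def by simp

lemma x_inj: "inj x"
proof (rule injI)
  fix a b assume "x a = x b"
  thus "a = b" using x_mono[of a b] x_mono[of b a] by (cases a b rule: linorder_cases) auto
qed

lemma hook_cell: assumes "j < L i"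
  shows "int ((L i - (j+1)) + (L j - (i+1)) + 1) = x i + x j + 1"
proof -
  have "i < L j" using SYM_D[OF sym] assms by blast
  thus ?thesis using assms unfolding x_def by (simp add: of_nat_diff)
qed

lemma noncell: assumes "\<not> j < L i" shows "x i + x j \<le> -2"
proof -
  have "\<not> i < L j" using SYM_D[OF sym] assms by blast
  thus ?thesis using assms unfolding x_def by simp
qed

lemma cell_sum: "x i + x j \<noteq> -1"
proof (cases "j < L i")
  case True
  have "int ((L i - (j+1)) + (L j - (i+1)) + 1) \<ge> 1" by simp
  thus ?thesis using hook_cell[OF True] by simp
next
  case False thus ?thesis using noncell by fastforce
qed

lemma range_x: "u \<in> range x \<longleftrightarrow> mem (A_of L) u"
proof (cases "u \<ge> 0")
  case True
  have "u \<in> range x \<longleftrightarrow> nat u \<in> A_of L"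
  proof
    assume "u \<in> range x"
    then obtain i where i: "x i = u" by auto
    hence "i < L i" "L i - i - 1 = nat u" using True unfolding x_def by auto
    thus "nat u \<in> A_of L" unfolding A_of_def by force
  next
    assume "nat u \<in> A_of L"
    then obtain i where "i < L i" "nat u = L i - i - 1" unfolding A_of_def by auto
    hence "x i = u" using True unfolding x_def by (simp add: of_nat_diff)
    thus "u \<in> range x" by (metis rangeI)
  qed
  thus ?thesis using True unfolding mem_def by simp
next
  case False
  define y where "y = nat (-1 - u)"
  have Y: "int y = -1 - u" using False unfolding y_def by simp
  have pos: "int y \<in> range x \<longleftrightarrow> y \<in> A_of L"
  proof
    assume "int y \<in> range x"
    then obtain i where i: "x i = int y" by auto
    hence "i < L i" "L i - i - 1 = y" unfolding x_def by auto
    thus "y \<in> A_of L" unfolding A_of_def by force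
  next
    assume "y \<in> A_of L"
    then obtain i where "i < L i" "y = L i - i - 1" unfolding A_of_def by auto
    hence "x i = int y" unfolding x_def by (simp add: of_nat_diff)
    thus "int y \<in> range x" by (metis rangeI)
  qed
  have "u \<in> range x \<longleftrightarrow> int y \<notin> range x"
  proof
    assume "u \<in> range x"
    then obtain i where i: "x i = u" by auto
    show "int y \<notin> range x"
    proof
      assume "int y \<in> range x"
      then obtain j where "x j = int y" by auto
      thus False using cell_sum[of i j] i Y by simp
    qed
  next
    assume ny: "int y \<notin> range x"
    define K where "K = {k. x k > int y}"
    have Ksub: "K \<subseteq> {..<L 0}"
    proof
      fix k assume "k \<in> K"
      hence "k < L k" unfolding K_def x_def by simp
      hence "0 < L k" by simp
      thus "k \<in> {..<L 0}" using SYM_pos[OF sym, of k] by simp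
    qed
    have K: "K = {..<card K}"
    proof (rule downclosed_card)
      show "finite K" using Ksub finite_subset by blast
      show "b \<in> K" if "a \<in> K" "b < a" for a b
        using that x_mono[of b a] unfolding K_def by simp
    qed
    define p where "p = card K"
    have inK: "k \<in> K \<longleftrightarrow> k < p" for k using K p_def by blast
    define j where "j = y + p"
    have "{k. j < L k} = {..<p}"
    proof (rule set_eqI)
      fix k
      show "k \<in> {k. j < L k} \<longleftrightarrow> k \<in> {..<p}"
      proof
        assume "k \<in> {..<p}"
        hence kp: "k < p" by simp
        hence "p - 1 \<in> K" using inK by simp
        hence "x (p - 1) \<ge> int y + 1" unfolding K_def by simp
        moreover have "x (p - 1) + (int (p - 1) - int k) \<le> x k" using kp by (intro x_mono) simp
        ultimately have "x k \<ge> int y + int p - int k" using kp by (simp add: of_nat_diff)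
        thus "k \<in> {k. j < L k}" unfolding x_def j_def by simp
      next
        assume kj: "k \<in> {k. j < L k}"
        show "k \<in> {..<p}"
        proof (rule ccontr)
          assume "k \<notin> {..<p}"
          hence pk: "p \<le> k" by simp
          have "x p \<le> int y" using inK[of p] unfolding K_def by simp
          moreover have "x p \<noteq> int y" using ny by (metis rangeI)
          ultimately have "L p \<le> j" unfolding x_def j_def by simp
          moreover have "L k \<le> L p" using SYM_mono[OF sym pk] .
          ultimately show False using kj by simp
        qed
      qed
    qed
    moreover have "{k. j < L k} = {..<L j}" using SYM_D[OF sym] by blast
    ultimately have "L j = p" by (metis card_lessThan)
    hence "x j = u" unfolding x_def j_def using Y by simp
    thus "u \<in> range x" by (metis rangeI)
  qed
  thus ?thesis using pos False unfolding mem_def y_def by simp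
qed


lemma NH_h: assumes m: "m > 0" shows "NH L (2*m) = h m (A_of L)"
proof -
  let ?c = "2 * int m - 1"
  define P where "P = {(i, j). x i + x j = ?c}"
  have P0: "{(i, j). j < L i \<and> (L i - (j+1)) + (L j - (i+1)) + 1 = 2*m} = P"
  proof (rule set_eqI)
    fix p :: "nat \<times> nat"
    obtain i j where p: "p = (i, j)" by (cases p)
    show "p \<in> {(i, j). j < L i \<and> (L i - (j+1)) + (L j - (i+1)) + 1 = 2*m} \<longleftrightarrow> p \<in> P"
    proof
      assume "p \<in> {(i, j). j < L i \<and> (L i - (j+1)) + (L j - (i+1)) + 1 = 2*m}"
      hence a: "j < L i" "(L i - (j+1)) + (L j - (i+1)) + 1 = 2*m" unfolding p by auto
      have "int ((L i - (j+1)) + (L j - (i+1)) + 1) = int (2*m)" using a(2) by simp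
      thus "p \<in> P" unfolding P_def p using hook_cell[OF a(1)] by simp
    next
      assume "p \<in> P"
      hence s: "x i + x j = ?c" unfolding P_def p by simp
      have c: "j < L i" using noncell[of j i] s m by fastforce
      have "int ((L i - (j+1)) + (L j - (i+1)) + 1) = int (2*m)" using hook_cell[OF c] s by simp
      hence "(L i - (j+1)) + (L j - (i+1)) + 1 = 2*m" by (simp only: of_nat_eq_iff)
      thus "p \<in> {(i, j). j < L i \<and> (L i - (j+1)) + (L j - (i+1)) + 1 = 2*m}" using c p by simp
    qed
  qed
  have injf: "inj_on fst P"
  proof (rule inj_onI)
    fix p q assume "p \<in> P" "q \<in> P" "fst p = fst q"
    moreover obtain a b where "p = (a, b)" by (cases p)
    moreover obtain a' b' where "q = (a', b')" by (cases q)
    ultimately have "a = a'" "x a + x b = ?c" "x a' + x b' = ?c" unfolding P_def by auto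
    hence "x b = x b'" by simp
    hence "b = b'" using x_inj by (simp add: inj_eq)
    thus "p = q" using \<open>p = (a, b)\<close> \<open>q = (a', b')\<close> \<open>a = a'\<close> by simp
  qed
  have fP: "fst ` P = {i. \<exists>j. x i + x j = ?c}" unfolding P_def by force
  have xi: "x ` {i. \<exists>j. x i + x j = ?c} = {u. mem (A_of L) u \<and> mem (A_of L) (?c - u)}"
  proof (rule set_eqI)
    fix u
    have "u \<in> x ` {i. \<exists>j. x i + x j = ?c} \<longleftrightarrow> u \<in> range x \<and> ?c - u \<in> range x"
    proof
      assume "u \<in> x ` {i. \<exists>j. x i + x j = ?c}"
      then obtain i j where ij: "u = x i" "x i + x j = ?c" by auto
      hence "?c - u = x j" by simp
      thus "u \<in> range x \<and> ?c - u \<in> range x" using ij(1) by (metis rangeI)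
    next
      assume "u \<in> range x \<and> ?c - u \<in> range x"
      then obtain i j where ij: "u = x i" "?c - u = x j" by (metis rangeE)
      hence "x i + x j = ?c" by simp
      hence "i \<in> {i. \<exists>j. x i + x j = ?c}" by blast
      thus "u \<in> x ` {i. \<exists>j. x i + x j = ?c}" using ij(1) by blast
    qed
    thus "u \<in> x ` {i. \<exists>j. x i + x j = ?c} \<longleftrightarrow> u \<in> {u. mem (A_of L) u \<and> mem (A_of L) (?c - u)}"
      using range_x by simp
  qed
  have "NH L (2*m) = card P" unfolding NH_def P0 ..
  also have "\<dots> = card (fst ` P)" by (rule card_image[OF injf, symmetric])
  also have "\<dots> = card (x ` fst ` P)" by (rule card_image[OF inj_on_subset[OF x_inj], symmetric]) simp
  also have "\<dots> = h m (A_of L)" unfolding fP xi h_def ..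
  finally show ?thesis .
qed

end




definition Lof :: "nat list \<Rightarrow> nat \<Rightarrow> nat" where
  "Lof lam i = (if i < length lam then lam ! i else 0)"

lemma Lof_mono: assumes "is_partition lam" "i \<le> i'" shows "Lof lam i' \<le> Lof lam i"
proof -
  have sw: "sorted_wrt (\<ge>) lam" using assms(1) unfolding is_partition_def by simp
  show ?thesis
  proof (cases "i' < length lam")
    case True
    hence "lam ! i' \<le> lam ! i" using sw assms(2) unfolding sorted_wrt_iff_nth_less
      by (cases "i = i'") auto
    thus ?thesis using True assms(2) unfolding Lof_def by simp
  next
    case False thus ?thesis unfolding Lof_def by simp
  qed
qed

lemma col_len_Lof: "col_len lam j = card {i. j < Lof lam i}"
proof -
  have "{i. i < length lam \<and> j < lam ! i} = {i. j < Lof lam i}" unfolding Lof_def by auto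
  thus ?thesis unfolding col_len_def by simp
qed

lemma sc_len: assumes "self_conjugate lam" shows "length lam = Lof lam 0"
proof -
  have "length (conjugate lam) = length lam" using assms unfolding self_conjugate_def by simp
  hence "(if lam = [] then 0 else hd lam) = length lam" unfolding conjugate_def by simp
  thus ?thesis unfolding Lof_def by (cases lam) auto
qed

lemma sc_col: assumes "is_partition lam" "self_conjugate lam" shows "col_len lam j = Lof lam j"
proof (cases "j < length lam")
  case True
  have l: "length lam = (if lam = [] then 0 else hd lam)" using sc_len[OF assms(2)] unfolding Lof_def
    by (cases lam) auto
  have "conjugate lam ! j = lam ! j" using assms(2) unfolding self_conjugate_def by simp
  hence "col_len lam j = lam ! j" unfolding conjugate_def using True l by simp
  thus ?thesis using True unfolding Lof_def by simp
next
  case False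
  have "{i. j < Lof lam i} = {}"
  proof -
    have "Lof lam i \<le> Lof lam 0" for i using Lof_mono[OF assms(1)] by simp
    moreover have "Lof lam 0 \<le> j" using False sc_len[OF assms(2)] by simp
    ultimately show ?thesis by (auto simp: not_less) (meson le_trans not_le)
  qed
  thus ?thesis using False unfolding col_len_Lof Lof_def by simp
qed

lemma sc_SYM: assumes "is_partition lam" "self_conjugate lam" shows "SYM (Lof lam)"
proof -
  have "{i. j < Lof lam i} = {..<Lof lam j}" for j
  proof -
    have fin: "finite {i. j < Lof lam i}" by (rule finite_subset[of _ "{..<length lam}"]) (auto simp: Lof_def split: if_splits)
    have "{i. j < Lof lam i} = {..<card {i. j < Lof lam i}}"
    proof (rule downclosed_card[OF fin])
      show "b \<in> {i. j < Lof lam i}" if "a \<in> {i. j < Lof lam i}" "b < a" for a b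
        using that Lof_mono[OF assms(1), of b a] by simp
    qed
    moreover have c: "card {i. j < Lof lam i} = Lof lam j" using sc_col[OF assms] col_len_Lof by simp
    ultimately show ?thesis by (simp only: c)
  qed
  thus ?thesis unfolding SYM_def by blast
qed

lemma sc_map: assumes "self_conjugate lam" shows "map (Lof lam) [0..<Lof lam 0] = lam"
proof (rule nth_equalityI)
  show "length (map (Lof lam) [0..<Lof lam 0]) = length lam" using sc_len[OF assms] by simp
  fix i assume "i < length (map (Lof lam) [0..<Lof lam 0])"
  hence i0: "i < Lof lam 0" by simp
  hence il: "i < length lam" using sc_len[OF assms] by simp
  have "map (Lof lam) [0..<Lof lam 0] ! i = Lof lam i" using i0 by simp
  also have "\<dots> = lam ! i" using il unfolding Lof_def by simp
  finally show "map (Lof lam) [0..<Lof lam 0] ! i = lam ! i" .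
qed

lemma sum_map_upt: "sum_list (map L [0..<n]) = (\<Sum>i<n. L i)"
  by (induction n) auto

context
  fixes L :: "nat \<Rightarrow> nat"
  assumes sym: "SYM L"
begin

definition lamL where "lamL = map L [0..<L 0]"

lemma Lof_lamL: "Lof lamL = L"
proof
  fix i show "Lof lamL i = L i"
  proof (cases "i < L 0")
    case True thus ?thesis unfolding Lof_def lamL_def by simp
  next
    case False
    hence "\<not> 0 < L i" using SYM_pos[OF sym, of i] by simp
    thus ?thesis using False unfolding Lof_def lamL_def by simp
  qed
qed

lemma part_lamL: "is_partition lamL"
  unfolding is_partition_def lamL_def
proof
  show "sorted_wrt (\<ge>) (map L [0..<L 0])"
    unfolding sorted_wrt_iff_nth_less using SYM_mono[OF sym] by auto
  show "\<forall>x\<in>set (map L [0..<L 0]). 0 < x"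
  proof
    fix x assume "x \<in> set (map L [0..<L 0])"
    then obtain i where "i < L 0" "x = L i" by auto
    thus "0 < x" using SYM_pos[OF sym, of i] by simp
  qed
qed

lemma sc_lamL: "self_conjugate lamL"
proof -
  have hd: "(if lamL = [] then 0 else hd lamL) = L 0" unfolding lamL_def
    by (cases "L 0 = 0") (simp_all add: upt_conv_Cons del: upt_Suc)
  have "col_len lamL j = L j" for j
  proof -
    have "col_len lamL j = card {i. j < L i}" unfolding col_len_Lof Lof_lamL ..
    also have "{i. j < L i} = {..<L j}" using SYM_D[OF sym] by blast
    finally show ?thesis by simp
  qed
  hence "conjugate lamL = map L [0..<L 0]" unfolding conjugate_def hd by simp
  thus ?thesis unfolding self_conjugate_def lamL_def by simp
qed

lemma sum_lamL: "sum_list lamL = (\<Sum>i<L 0. L i)"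
  unfolding lamL_def by (rule sum_map_upt)

end

lemma cells_Lof: "cells lam = {(i, j). j < Lof lam i}"
  unfolding cells_def Lof_def by (auto split: if_splits)

lemma n_hook_NH: assumes "is_partition lam" "self_conjugate lam" shows "n_hook t lam = NH (Lof lam) t"
proof -
  have "{c \<in> cells lam. hook lam c = t} =
        {(i, j). j < Lof lam i \<and> (Lof lam i - (j+1)) + (Lof lam j - (i+1)) + 1 = t}"
  proof -
    have hk: "hook lam (i, j) = (Lof lam i - (j+1)) + (Lof lam j - (i+1)) + 1" if "j < Lof lam i" for i j
    proof -
      have "i < length lam" using that unfolding Lof_def by (simp split: if_splits)
      hence "lam ! i = Lof lam i" unfolding Lof_def by simp
      thus ?thesis unfolding hook_def using sc_col[OF assms, of j] by simp
    qed
    show ?thesis unfolding cells_Lof using hk by auto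
  qed
  thus ?thesis unfolding n_hook_def NH_def by simp
qed


lemma lamL_eq: assumes "SYM L" shows "lamL L = map L [0..<L 0]" by (rule lamL_def[OF assms])

lemma main_eq: assumes m: "m > 0"
  shows "a_star (2*m) n = (\<Sum>A\<in>DD n. h m A)"
proof -
  let ?SC = "{lam \<in> partitions n. self_conjugate lam}"
  let ?Phi = "\<lambda>lam. A_of (Lof lam)" and ?Psi = "\<lambda>A. lamL (LA A)"
  have scP: "is_partition lam" "self_conjugate lam" "sum_list lam = n" if "lam \<in> ?SC" for lam
    using that unfolding partitions_def by auto
  have symP: "SYM (Lof lam)" if "lam \<in> ?SC" for lam using sc_SYM scP[OF that] by blast
  have bij: "bij_betw ?Phi ?SC (DD n)"
  proof (rule bij_betw_byWitness[where f'="?Psi"])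
    show "\<forall>lam\<in>?SC. ?Psi (?Phi lam) = lam"
    proof
      fix lam assume l: "lam \<in> ?SC"
      have "?Psi (?Phi lam) = lamL (Lof lam)" using LA_A_of[OF symP[OF l]] by simp
      also have "\<dots> = lam" unfolding lamL_eq[OF symP[OF l]] using sc_map[OF scP(2)[OF l]] .
      finally show "?Psi (?Phi lam) = lam" .
    qed
    show "\<forall>A\<in>DD n. ?Phi (?Psi A) = A"
    proof
      fix A assume "A \<in> DD n"
      hence f: "finite A" unfolding DD_def by simp
      show "?Phi (?Psi A) = A" using Lof_lamL[OF SYM_LA[OF f]] A_of_LA[OF f] by simp
    qed
    show "?Phi ` ?SC \<subseteq> DD n"
    proof
      fix B assume "B \<in> ?Phi ` ?SC"
      then obtain lam where l: "lam \<in> ?SC" and B: "B = ?Phi lam" by auto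
      have "wt B = (\<Sum>i<Lof lam 0. Lof lam i)" unfolding B by (rule wt_A_of[OF symP[OF l]])
      also have "\<dots> = sum_list (lamL (Lof lam))" by (rule sum_lamL[OF symP[OF l], symmetric])
      also have "lamL (Lof lam) = lam" unfolding lamL_eq[OF symP[OF l]] using sc_map[OF scP(2)[OF l]] .
      finally have "wt B = n" using scP(3)[OF l] by simp
      thus "B \<in> DD n" unfolding DD_def B using finite_A_of[OF symP[OF l]] by simp
    qed
    show "?Psi ` DD n \<subseteq> ?SC"
    proof
      fix lam assume "lam \<in> ?Psi ` DD n"
      then obtain A where A: "A \<in> DD n" and l: "lam = ?Psi A" by auto
      hence f: "finite A" and w: "wt A = n" unfolding DD_def by auto
      note s = SYM_LA[OF f]
      have "sum_list lam = n" unfolding l sum_lamL[OF s] wt_LA[OF f] w ..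
      thus "lam \<in> ?SC" unfolding partitions_def l using part_lamL[OF s] sc_lamL[OF s] l by simp
    qed
  qed
  have "a_star (2*m) n = (\<Sum>lam\<in>?SC. n_hook (2*m) lam)" unfolding a_star_def ..
  also have "\<dots> = (\<Sum>lam\<in>?SC. h m (?Phi lam))"
  proof (rule sum.cong[OF refl])
    fix lam assume l: "lam \<in> ?SC"
    interpret symL "Lof lam" by unfold_locales (rule symP[OF l])
    show "n_hook (2*m) lam = h m (?Phi lam)"
      using n_hook_NH[OF scP(1,2)[OF l]] NH_h[OF m] by simp
  qed
  also have "\<dots> = (\<Sum>A\<in>DD n. h m A)" by (rule sum.reindex_bij_betw[OF bij])
  finally show ?thesis .
qed

theorem corollary1p3:
  fixes n m :: nat
  assumes "m \<ge> 1"
  shows "(2 * m) dvd a_star (2 * m) n"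
  using main_eq[of m n] P3_main[of m n] assms by simp


end
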